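(* Let $\mathbb{F}\in\{\mathbb{R},\mathbb{C}\}$, let $A$ be an $n\times m$ matrix over $\mathbb{F}$, and let $p,q\in[1,\infty]$. Suppose $v\in\mathbb{F}^m$, $v\ne0$, is a maximizer of $\|Ax\|_q/\|x\|_p$ over nonzero $x\in\mathbb{F}^m$ such that (i) all nonzero components of $v$ have the same absolute value, and (ii) all nonzero components of $Av$ have the same absolute value. If $1<p<\infty$, or $p=1$ and $v\in K_1$, or $p=\infty$ and $v\in K_{-1}$, then $v$ is an eigenvector of $A^*A$.
   Context: $\|x\|_p$ is the Hölder $\ell_p$ norm. $A^*$ is the conjugate transpose. $K_1\subset\mathbb{F}^m$ is the set of vectors all of whose components have equal absolute values; $K_{-1}\subset\mathbb{F}^m$ is the set of vectors with at most one nonzero component. *)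

theory Defs
  imports "HOL-Analysis.Analysis"
begin

definition lpnorm :: "ereal \<Rightarrow> ('a::real_normed_vector) ^ 'm \<Rightarrow> real" where
  "lpnorm p x =
     (if p = \<infinity> then Max (range (\<lambda>i. norm (x $ i)))
      else (\<Sum>i\<in>UNIV. norm (x $ i) powr real_of_ereal p) powr (1 / real_of_ereal p))"

definition K1 :: "(('a::real_normed_vector) ^ 'm) set" where
  "K1 = {x. \<forall>i j. norm (x $ i) = norm (x $ j)}"

definition Km1 :: "(('a::real_normed_vector) ^ 'm) set" where
  "Km1 = {x. card {i. x $ i \<noteq> 0} \<le> 1}"

definition equal_modulus_support :: "('a::real_normed_vector) ^ 'm \<Rightarrow> bool" where
  "equal_modulus_support x \<longleftrightarrow>
     (\<forall>i j. x $ i \<noteq> 0 \<longrightarrow> x $ j \<noteq> 0 \<longrightarrow> norm (x $ i) = norm (x $ j))"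

definition is_pq_maximizer ::
  "ereal \<Rightarrow> ereal \<Rightarrow> ('a::{real_normed_vector, semiring_1}) ^ 'm ^ 'n \<Rightarrow> 'a ^ 'm \<Rightarrow> bool" where
  "is_pq_maximizer p q A v \<longleftrightarrow> v \<noteq> 0 \<and>
     (\<forall>x. x \<noteq> 0 \<longrightarrow> lpnorm q (A *v x) / lpnorm p x \<le> lpnorm q (A *v v) / lpnorm p v)"

definition cadjoint :: "complex ^ 'm ^ 'n \<Rightarrow> complex ^ 'n ^ 'm" where
  "cadjoint A = (\<chi> i j. cnj (A $ j $ i))"

definition lemma3p1_hyp ::
  "ereal \<Rightarrow> ereal \<Rightarrow> ('a::{real_normed_vector, semiring_1}) ^ 'm ^ 'n \<Rightarrow> 'a ^ 'm \<Rightarrow> bool" where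
  "lemma3p1_hyp p q A v \<longleftrightarrow>
     is_pq_maximizer p q A v \<and> equal_modulus_support v \<and> equal_modulus_support (A *v v) \<and>
     ((1 < p \<and> p < \<infinity>) \<or> (p = 1 \<and> v \<in> K1) \<or> (p = \<infinity> \<and> v \<in> Km1))"

end

theory Submission
  imports Defs
begin


lemma tangent_powr:
  fixes q m a :: real
  assumes q: "1 \<le> q" and m: "0 < m" and a: "0 \<le> a"
  shows "m powr q + q * m powr (q - 1) * (a - m) \<le> a powr q"
proof (cases "a = 0")
  case True
  have "m powr q + q * m powr (q - 1) * (0 - m) = (1 - q) * m powr q"
    using m by (simp add: powr_diff field_simps)
  also have "\<dots> \<le> 0" using q by (simp add: mult_nonpos_nonneg)
  finally show ?thesis using True by simp
next
  case False
  hence ap: "a > 0" using a by simp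
  have "a powr q - m powr q \<ge> (q * m powr (q - 1)) * (a - m)"
  proof (rule convex_on_imp_above_tangent[where A="{0<..}"])
    show "convex_on {0<..} (\<lambda>x. x powr q)" using powr_convex[OF q] .
    show "connected ({0<..} :: real set)" by simp
    show "m \<in> interior {0<..}" using m by (simp add: interior_open open_greaterThan)
    show "a \<in> {0<..}" using ap by simp
    show "((\<lambda>x. x powr q) has_field_derivative q * m powr (q - 1)) (at m within {0<..})"
      using has_real_derivative_powr[OF m] by (rule has_field_derivative_at_within)
  qed
  thus ?thesis by simp
qed

lemma powmean:
  fixes a :: "'i \<Rightarrow> real"
  assumes fin: "finite S" and ne: "S \<noteq> {}" and q: "1 \<le> q" and a: "\<And>i. i \<in> S \<Longrightarrow> 0 \<le> a i"
  shows "(\<Sum>i\<in>S. a i) \<le> real (card S) powr (1 - 1/q) * (\<Sum>i\<in>S. a i powr q) powr (1/q)"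
proof (cases "(\<Sum>i\<in>S. a i) = 0")
  case True
  thus ?thesis by simp
next
  case False
  define n where "n = real (card S)"
  have n: "n > 0" using fin ne by (simp add: n_def card_gt_0_iff)
  have s0: "(\<Sum>i\<in>S. a i) > 0" using False sum_nonneg[of S a] a by force
  define m where "m = (\<Sum>i\<in>S. a i) / n"
  have m: "m > 0" using n s0 by (simp add: m_def)
  have "(\<Sum>i\<in>S. m powr q + q * m powr (q - 1) * (a i - m)) \<le> (\<Sum>i\<in>S. a i powr q)"
    by (rule sum_mono, rule tangent_powr[OF q m a], simp)
  moreover have "(\<Sum>i\<in>S. m powr q + q * m powr (q - 1) * (a i - m)) = n * m powr q"
  proof -
    have "(\<Sum>i\<in>S. m powr q + q * m powr (q - 1) * (a i - m))
        = n * m powr q + q * m powr (q - 1) * ((\<Sum>i\<in>S. a i) - n * m)"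
      by (simp add: sum.distrib sum_distrib_left sum_distrib_right sum_subtractf n_def algebra_simps)
    also have "(\<Sum>i\<in>S. a i) - n * m = 0" using n by (simp add: m_def)
    finally show ?thesis by simp
  qed
  ultimately have le: "n * m powr q \<le> (\<Sum>i\<in>S. a i powr q)" by simp
  have "(n * m powr q) powr (1/q) \<le> (\<Sum>i\<in>S. a i powr q) powr (1/q)"
    by (rule powr_mono2) (use le n m q in auto)
  moreover have "(n * m powr q) powr (1/q) = n powr (1/q) * m"
    using n m q by (simp add: powr_mult powr_powr)
  ultimately have "n powr (1 - 1/q) * (n powr (1/q) * m) \<le> n powr (1 - 1/q) * (\<Sum>i\<in>S. a i powr q) powr (1/q)"
    by (intro mult_left_mono) auto
  moreover have "n powr (1 - 1/q) * (n powr (1/q) * m) = (\<Sum>i\<in>S. a i)"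
    using n by (simp add: mult.assoc[symmetric] powr_add[symmetric] m_def)
  ultimately show ?thesis by (simp add: n_def)
qed



lemma ereal_cases_ge1:
  assumes "1 \<le> (p::ereal)" "p \<noteq> \<infinity>"
  obtains r where "p = ereal r" "1 \<le> r"
  using assms by (cases p) auto

lemma lpnorm_fin:
  assumes "p = ereal r"
  shows "lpnorm p x = (\<Sum>i\<in>UNIV. norm (x $ i) powr r) powr (1 / r)"
  using assms by (simp add: lpnorm_def)

lemma lpnorm_inf:
  "lpnorm \<infinity> x = Max (range (\<lambda>i. norm (x $ i)))"
  by (simp add: lpnorm_def)

lemma norm_le_Max: "norm (x $ i) \<le> Max (range (\<lambda>i. norm (x $ i)))"
  by (rule Max_ge) auto

lemma lpnorm_nonneg: "0 \<le> lpnorm p x"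
proof (cases "p = \<infinity>")
  case True
  have "norm (x $ undefined) \<le> Max (range (\<lambda>i. norm (x $ i)))" by (rule norm_le_Max)
  moreover have "0 \<le> norm (x $ undefined)" by simp
  moreover have "lpnorm p x = Max (range (\<lambda>i. norm (x $ i)))" using True by (simp add: lpnorm_inf)
  ultimately show ?thesis by linarith
qed (simp add: lpnorm_def)

lemma lpnorm_pos:
  assumes p: "1 \<le> p" and x: "x \<noteq> 0"
  shows "0 < lpnorm p x"
proof -
  obtain k where k: "x $ k \<noteq> 0" using x by (metis vec_eq_iff zero_index)
  show ?thesis
  proof (cases "p = \<infinity>")
    case True
    have "norm (x $ k) \<le> Max (range (\<lambda>i. norm (x $ i)))" by (rule norm_le_Max)
    moreover have "0 < norm (x $ k)" using k by simp
    moreover have "lpnorm p x = Max (range (\<lambda>i. norm (x $ i)))" using True by (simp add: lpnorm_inf)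
  ultimately show ?thesis by linarith
  next
    case False
    then obtain r where r: "p = ereal r" "1 \<le> r" using ereal_cases_ge1 p by blast
    have "0 < norm (x $ k) powr r" using k by simp
    also have "\<dots> \<le> (\<Sum>i\<in>UNIV. norm (x $ i) powr r)"
      by (rule member_le_sum) auto
    finally show ?thesis using r by (simp add: lpnorm_def)
  qed
qed

lemma holder_lin:
  fixes y :: "'a::real_inner ^ 'n"
  assumes q: "1 \<le> q" and ems: "equal_modulus_support y" and y0: "y \<noteq> 0"
  obtains u K where "K > 0" "\<And>z. (\<Sum>i\<in>UNIV. inner (z$i) (u$i)) \<le> K * lpnorm q z"
    "(\<Sum>i\<in>UNIV. inner (y$i) (u$i)) = K * lpnorm q y" "\<exists>\<alpha>>0. y = \<alpha> *\<^sub>R u"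
proof -
  obtain k where k: "y $ k \<noteq> 0" using y0 by (metis vec_eq_iff zero_index)
  define \<alpha> where "\<alpha> = norm (y $ k)"
  have \<alpha>: "\<alpha> > 0" using k by (simp add: \<alpha>_def)
  define S where "S = {i. y $ i \<noteq> 0}"
  have kS: "k \<in> S" using k by (simp add: S_def)
  have Sne: "S \<noteq> {}" using kS by auto
  have finS: "finite S" by simp
  define n where "n = real (card S)"
  have n: "n > 0" using kS by (auto simp: n_def card_gt_0_iff)
  have nyS: "norm (y $ i) = \<alpha>" if "i \<in> S" for i
    using ems that k unfolding equal_modulus_support_def S_def \<alpha>_def by blast
  have y0S: "y $ i = 0" if "i \<notin> S" for i using that by (simp add: S_def)
  define u where "u = (1/\<alpha>) *\<^sub>R y"
  have yu: "y = \<alpha> *\<^sub>R u" using \<alpha> by (simp add: u_def)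
  have key: "(\<Sum>i\<in>UNIV. inner (z$i) (u$i)) \<le> (\<Sum>i\<in>S. norm (z $ i))" for z
  proof -
    have "(\<Sum>i\<in>UNIV. inner (z$i) (u$i)) = (\<Sum>i\<in>S. inner (z$i) (u$i))"
      by (rule sum.mono_neutral_right) (auto simp: u_def y0S)
    also have "\<dots> \<le> (\<Sum>i\<in>S. norm (z $ i))"
    proof (rule sum_mono)
      fix i assume i: "i \<in> S"
      have "inner (z$i) (u$i) \<le> norm (z$i) * norm (u$i)" by (rule norm_cauchy_schwarz)
      also have "norm (u$i) = 1" using nyS[OF i] \<alpha> by (simp add: u_def)
      finally show "inner (z$i) (u$i) \<le> norm (z $ i)" by simp
    qed
    finally show ?thesis .
  qed
  have eqS: "(\<Sum>i\<in>UNIV. inner (y$i) (u$i)) = n * \<alpha>"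
  proof -
    have "(\<Sum>i\<in>UNIV. inner (y$i) (u$i)) = (\<Sum>i\<in>S. inner (y$i) (u$i))"
      by (rule sum.mono_neutral_right) (auto simp: u_def y0S)
    also have "\<dots> = (\<Sum>i\<in>S. \<alpha>)"
    proof (rule sum.cong[OF refl])
      fix i assume i: "i \<in> S"
      have "inner (y$i) (u$i) = (1/\<alpha>) * (norm (y$i))^2"
        by (simp add: u_def power2_norm_eq_inner)
      also have "\<dots> = \<alpha>" using nyS[OF i] \<alpha> by (simp add: power2_eq_square)
      finally show "inner (y$i) (u$i) = \<alpha>" .
    qed
    finally show ?thesis by (simp add: n_def)
  qed
  show ?thesis
  proof (cases "q = \<infinity>")
    case True
    show ?thesis
    proof (rule that[of n u])
      show "n > 0" by fact
      show "(\<Sum>i\<in>UNIV. inner (z$i) (u$i)) \<le> n * lpnorm q z" for z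
      proof -
        have "(\<Sum>i\<in>S. norm (z $ i)) \<le> (\<Sum>i\<in>S. lpnorm q z)"
          by (rule sum_mono) (simp add: True lpnorm_inf norm_le_Max)
        thus ?thesis using key[of z] by (simp add: n_def)
      qed
      have "lpnorm q y = \<alpha>"
        unfolding True lpnorm_inf
      proof (rule Max_eqI)
        show "finite (range (\<lambda>i. norm (y $ i)))" by simp
        show "\<alpha> \<in> range (\<lambda>i. norm (y $ i))" using \<alpha>_def by auto
        show "b \<le> \<alpha>" if hb: "b \<in> range (\<lambda>i. norm (y $ i))" for b
        proof -
          obtain i where b: "b = norm (y $ i)" using hb by blast
          show ?thesis
          proof (cases "i \<in> S")
            case True thus ?thesis using b nyS by simp
          next
            case False thus ?thesis using b y0S \<alpha> by simp
          qed
        qed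
      qed
      thus "(\<Sum>i\<in>UNIV. inner (y$i) (u$i)) = n * lpnorm q y" using eqS by simp
      show "\<exists>\<alpha>>0. y = \<alpha> *\<^sub>R u" using yu \<alpha> by blast
    qed
  next
    case False
    then obtain r where r: "q = ereal r" "1 \<le> r" using ereal_cases_ge1 q by blast
    show ?thesis
    proof (rule that[of "n powr (1 - 1/r)" u])
      show "n powr (1 - 1/r) > 0" using n by simp
      show "(\<Sum>i\<in>UNIV. inner (z$i) (u$i)) \<le> n powr (1 - 1/r) * lpnorm q z" for z
      proof -
        have "(\<Sum>i\<in>S. norm (z $ i)) \<le> n powr (1 - 1/r) * (\<Sum>i\<in>S. norm (z $ i) powr r) powr (1/r)"
          unfolding n_def by (rule powmean[OF finS Sne r(2)]) simp
        also have "\<dots> \<le> n powr (1 - 1/r) * (\<Sum>i\<in>UNIV. norm (z $ i) powr r) powr (1/r)"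
        proof -
          have "(\<Sum>i\<in>S. norm (z $ i) powr r) \<le> (\<Sum>i\<in>UNIV. norm (z $ i) powr r)"
            by (rule sum_mono2) auto
          hence "(\<Sum>i\<in>S. norm (z $ i) powr r) powr (1/r) \<le> (\<Sum>i\<in>UNIV. norm (z $ i) powr r) powr (1/r)"
            using r by (intro powr_mono2) (auto intro: sum_nonneg)
          thus ?thesis using n by (simp add: mult_left_mono)
        qed
        finally show ?thesis using key[of z] r by (simp add: lpnorm_fin)
      qed
      have "(\<Sum>i\<in>UNIV. norm (y $ i) powr r) = (\<Sum>i\<in>S. norm (y $ i) powr r)"
        by (rule sum.mono_neutral_right) (auto simp: y0S)
      also have "\<dots> = n * \<alpha> powr r" using nyS by (simp add: n_def)
      finally have "lpnorm q y = (n * \<alpha> powr r) powr (1/r)" using r by (simp add: lpnorm_fin)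
      also have "\<dots> = n powr (1/r) * \<alpha>" using n \<alpha> r by (simp add: powr_mult powr_powr)
      finally have "n powr (1 - 1/r) * lpnorm q y = n * \<alpha>"
        using n by (simp add: mult.assoc[symmetric] powr_add[symmetric])
      thus "(\<Sum>i\<in>UNIV. inner (y$i) (u$i)) = n powr (1 - 1/r) * lpnorm q y" using eqS by simp
      show "\<exists>\<alpha>>0. y = \<alpha> *\<^sub>R u" using yu \<alpha> by blast
    qed
  qed
qed



lemma deriv_abs_powr:
  fixes r :: real assumes r: "1 < r"
  shows "((\<lambda>t. \<bar>t\<bar> powr r) has_real_derivative 0) (at 0)"
proof -
  have "((\<lambda>y. \<bar>y\<bar> powr r / y) \<longlongrightarrow> 0) (at (0::real))"
  proof (rule Lim_null_comparison)
    have ev: "\<forall>\<^sub>F y in at (0::real). y \<noteq> 0" by (simp add: eventually_at_filter)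
    show "\<forall>\<^sub>F y in at 0. norm (\<bar>y\<bar> powr r / y) \<le> \<bar>y\<bar> powr (r - 1)"
    proof (rule eventually_mono[OF ev])
      fix y :: real assume y: "y \<noteq> 0"
      hence "norm (\<bar>y\<bar> powr r / y) = \<bar>y\<bar> powr r / \<bar>y\<bar>" by (simp add: abs_divide)
      also have "\<dots> = \<bar>y\<bar> powr (r - 1)" using y by (simp add: powr_diff)
      finally show "norm (\<bar>y\<bar> powr r / y) \<le> \<bar>y\<bar> powr (r - 1)" by simp
    qed
    show "((\<lambda>y. \<bar>y\<bar> powr (r - 1)) \<longlongrightarrow> 0) (at (0::real))"
      by (rule tendsto_zero_powrI) (use r in \<open>auto intro: tendsto_rabs_zero tendsto_ident_at\<close>)
  qed
  thus ?thesis by (simp add: has_field_derivative_iff)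
qed

lemma norm_powr_sq:
  fixes a :: "'a::real_normed_vector"
  shows "norm a powr r = (norm a ^ 2) powr (r / 2)"
proof (cases "a = 0")
  case True thus ?thesis by simp
next
  case False
  have "norm a ^ 2 = norm a powr 2" using powr_realpow[of "norm a" 2] False by simp
  hence "(norm a ^ 2) powr (r/2) = (norm a powr 2) powr (r/2)"
    by simp
  also have "\<dots> = norm a powr r" by (subst powr_powr) simp
  finally show ?thesis by simp
qed

lemma norm_add_scaleR_sq:
  fixes a d :: "'a::real_inner"
  shows "norm (a + t *\<^sub>R d) ^ 2 = norm a ^ 2 + 2 * t * inner a d + t^2 * norm d ^ 2"
  unfolding power2_norm_eq_inner by (simp add: inner_add_left inner_add_right inner_commute algebra_simps power2_eq_square)

lemma deriv_part1:
  fixes a d :: "'a::real_inner"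
  assumes a: "a \<noteq> 0" and r: "1 \<le> r" and C: "0 \<le> C"
  shows "((\<lambda>t. (C + norm (a + t *\<^sub>R d) powr r) powr (1/r)) has_real_derivative
     (C + norm a powr r) powr (1/r - 1) * norm a powr (r - 2) * inner a d) (at 0)"
proof -
  define Q where "Q t = norm a ^ 2 + 2 * t * inner a d + t^2 * norm d ^ 2" for t :: real
  have fe: "(\<lambda>t. (C + norm (a + t *\<^sub>R d) powr r) powr (1/r)) = (\<lambda>t. (C + Q t powr (r/2)) powr (1/r))"
    by (rule ext) (simp add: Q_def norm_powr_sq[of _ r] norm_add_scaleR_sq)
  have Q0: "Q 0 = norm a ^ 2" by (simp add: Q_def)
  have Q0p: "Q 0 > 0" using a by (simp add: Q0)
  have dQ: "(Q has_real_derivative 2 * inner a d) (at 0)"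
    unfolding Q_def by (auto intro!: derivative_eq_intros)
  have d2: "((\<lambda>t. Q t powr (r/2)) has_real_derivative (r/2) * Q 0 powr (r/2 - 1) * (2 * inner a d)) (at 0)"
    using DERIV_fun_powr[OF dQ Q0p, of "r/2"] by simp
  have d3: "((\<lambda>t. C + Q t powr (r/2)) has_real_derivative (r/2) * Q 0 powr (r/2 - 1) * (2 * inner a d)) (at 0)"
    using DERIV_add[OF DERIV_const[of C] d2] by simp
  have pos: "C + Q 0 powr (r/2) > 0" using C Q0p by (simp add: add_nonneg_pos)
  have d4: "((\<lambda>t. (C + Q t powr (r/2)) powr (1/r)) has_real_derivative
      (1/r) * (C + Q 0 powr (r/2)) powr (1/r - 1) * ((r/2) * Q 0 powr (r/2 - 1) * (2 * inner a d))) (at 0)"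
    using DERIV_fun_powr[OF d3 pos, of "1/r"] by simp
  have e1: "Q 0 powr (r/2) = norm a powr r" using norm_powr_sq[of a r] Q0 by simp
  have e2: "Q 0 powr (r/2 - 1) = norm a powr (r - 2)"
  proof -
    have "r/2 - 1 = (r - 2)/2" by simp
    hence "Q 0 powr (r/2 - 1) = (norm a ^ 2) powr ((r - 2)/2)" by (simp only: Q0)
    thus ?thesis using norm_powr_sq[of a "r - 2"] by simp
  qed
  have e3: "Q 0 powr ((r - 2)/2) = norm a powr (r - 2)"
  proof -
    have "(r - 2)/2 = r/2 - 1" by simp
    thus ?thesis using e2 by (simp only:)
  qed
  show ?thesis
    unfolding fe
    by (rule DERIV_cong[OF d4]) (use r in \<open>simp add: e1 e2 e3 field_simps\<close>)
qed

lemma deriv_part0: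
  fixes d :: "'a::real_inner"
  assumes r: "1 < r" and C: "0 < C"
  shows "((\<lambda>t. (C + norm (t *\<^sub>R d) powr r) powr (1/r)) has_real_derivative 0) (at 0)"
proof -
  have fe: "(\<lambda>t. (C + norm (t *\<^sub>R d) powr r) powr (1/r)) = (\<lambda>t. (C + \<bar>t\<bar> powr r * norm d powr r) powr (1/r))"
    by (rule ext) (simp add: powr_mult)
  have d2: "((\<lambda>t. C + \<bar>t\<bar> powr r * norm d powr r) has_real_derivative 0) (at 0)"
    using DERIV_add[OF DERIV_const[of C] DERIV_mult[OF deriv_abs_powr[OF r] DERIV_const[of "norm d powr r"]]]
    by simp
  have pos: "C + \<bar>0::real\<bar> powr r * norm d powr r > 0" using C by simp
  show ?thesis unfolding fe using DERIV_fun_powr[OF d2 pos, of "1/r"] by simp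
qed



lemma lin_axis:
  fixes v w :: "'a::real_inner ^ 'm"
  shows "(\<Sum>i\<in>UNIV. inner ((v + t *\<^sub>R axis j d)$i) (w$i)) = (\<Sum>i\<in>UNIV. inner (v$i) (w$i)) + t * inner d (w$j)"
proof -
  have "(\<Sum>i\<in>UNIV. inner ((v + t *\<^sub>R axis j d)$i) (w$i))
      = (\<Sum>i\<in>UNIV. inner (v$i) (w$i) + (if i = j then t * inner d (w$j) else 0))"
    by (rule sum.cong) (auto simp: axis_def inner_add_left)
  thus ?thesis by (simp add: sum.distrib)
qed

lemma stationary:
  fixes v w :: "'a::real_inner ^ 'm"
  assumes le: "\<And>x. (\<Sum>i\<in>UNIV. inner (x$i) (w$i)) \<le> N * lpnorm p x"
    and eq: "(\<Sum>i\<in>UNIV. inner (v$i) (w$i)) = N * lpnorm p v"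
    and dG: "((\<lambda>t. lpnorm p (v + t *\<^sub>R axis j d)) has_real_derivative G') (at 0)"
  shows "N * G' = inner d (w$j)"
proof -
  define L where "L = (\<Sum>i\<in>UNIV. inner (v$i) (w$i))"
  define F where "F t = N * lpnorm p (v + t *\<^sub>R axis j d) - (L + t * inner d (w$j))" for t
  have dF: "(F has_real_derivative N * G' - inner d (w$j)) (at 0)"
  proof -
    have "((\<lambda>t. N * lpnorm p (v + t *\<^sub>R axis j d) - (L + t * inner d (w$j))) has_real_derivative
        N * G' - (0 + 1 * inner d (w$j))) (at 0)"
      by (intro DERIV_diff DERIV_cmult dG DERIV_add DERIV_const DERIV_cmult_right DERIV_ident)
    thus ?thesis by (simp add: F_def[abs_def])
  qed
  have "\<forall>y. \<bar>0 - y\<bar> < 1 \<longrightarrow> F 0 \<le> F y"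
  proof (intro allI impI)
    fix y :: real
    have "F 0 = 0" by (simp add: F_def L_def eq)
    moreover have "0 \<le> F y" using le[of "v + y *\<^sub>R axis j d"] unfolding lin_axis by (simp add: F_def L_def)
    ultimately show "F 0 \<le> F y" by simp
  qed
  from DERIV_local_min[OF dF zero_less_one this] show ?thesis by simp
qed

lemma lpnorm_axis:
  fixes v :: "'a::real_normed_vector ^ 'm"
  assumes "p = ereal r"
  shows "lpnorm p (v + t *\<^sub>R axis j d) = ((\<Sum>i\<in>UNIV-{j}. norm (v$i) powr r) + norm (v$j + t *\<^sub>R d) powr r) powr (1/r)"
proof -
  have "(\<Sum>i\<in>UNIV. norm ((v + t *\<^sub>R axis j d) $ i) powr r)
      = norm ((v + t *\<^sub>R axis j d) $ j) powr r + (\<Sum>i\<in>UNIV-{j}. norm ((v + t *\<^sub>R axis j d) $ i) powr r)"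
    by (rule sum.remove) auto
  also have "(\<Sum>i\<in>UNIV-{j}. norm ((v + t *\<^sub>R axis j d) $ i) powr r) = (\<Sum>i\<in>UNIV-{j}. norm (v$i) powr r)"
    by (rule sum.cong) (auto simp: axis_def)
  also have "(v + t *\<^sub>R axis j d) $ j = v$j + t *\<^sub>R d" by (simp add: axis_def)
  finally show ?thesis using assms by (simp add: lpnorm_fin add.commute)
qed



lemma inner_self_zero_eq:
  fixes a b :: "'a::real_inner"
  assumes "\<And>d. inner a d = inner b d"
  shows "a = b"
proof -
  have "inner (a - b) (a - b) = 0" using assms[of "a - b"] by (simp add: inner_diff_left)
  thus ?thesis by simp
qed

lemma core_fin:
  fixes v w :: "'a::real_inner ^ 'm"
  assumes le: "\<And>x. (\<Sum>i\<in>UNIV. inner (x$i) (w$i)) \<le> N * lpnorm p x"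
    and eq: "(\<Sum>i\<in>UNIV. inner (v$i) (w$i)) = N * lpnorm p v"
    and v0: "v \<noteq> 0" and ems: "equal_modulus_support v"
    and p: "p = ereal r" "1 \<le> r" and nz: "\<And>j. v$j = 0 \<Longrightarrow> 1 < r"
  shows "\<exists>c. w = c *\<^sub>R v"
proof -
  obtain k where k: "v $ k \<noteq> 0" using v0 by (metis vec_eq_iff zero_index)
  define \<beta> where "\<beta> = norm (v $ k)"
  define S where "S = (\<Sum>i\<in>UNIV. norm (v$i) powr r)"
  have Spos: "S > 0"
  proof -
    have "0 < norm (v $ k) powr r" using k by simp
    also have "\<dots> \<le> S" unfolding S_def by (rule member_le_sum) auto
    finally show ?thesis .
  qed
  have Ssplit: "(\<Sum>i\<in>UNIV-{j}. norm (v$i) powr r) + norm (v$j) powr r = S" for j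
  proof -
    have "S = norm (v$j) powr r + (\<Sum>i\<in>UNIV-{j}. norm (v$i) powr r)"
      unfolding S_def by (rule sum.remove) auto
    thus ?thesis by simp
  qed
  define c where "c = N * S powr (1/r - 1) * \<beta> powr (r - 2)"
  have "w$j = c *\<^sub>R v$j" for j
  proof (cases "v$j = 0")
    case False
    have nb: "norm (v$j) = \<beta>" using ems False k unfolding equal_modulus_support_def \<beta>_def by blast
    define Cj where "Cj = (\<Sum>i\<in>UNIV-{j}. norm (v$i) powr r)"
    have Cj: "0 \<le> Cj" unfolding Cj_def by (rule sum_nonneg) simp
    have "N * ((Cj + norm (v$j) powr r) powr (1/r - 1) * norm (v$j) powr (r - 2) * inner (v$j) d) = inner d (w$j)" for d
    proof (rule stationary[OF le eq])
      have "(\<lambda>t. lpnorm p (v + t *\<^sub>R axis j d)) = (\<lambda>t. (Cj + norm (v$j + t *\<^sub>R d) powr r) powr (1/r))"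
        by (rule ext) (simp add: lpnorm_axis[OF p(1)] Cj_def)
      thus "((\<lambda>t. lpnorm p (v + t *\<^sub>R axis j d)) has_real_derivative
          (Cj + norm (v$j) powr r) powr (1/r - 1) * norm (v$j) powr (r - 2) * inner (v$j) d) (at 0)"
        using deriv_part1[OF False p(2) Cj] by simp
    qed
    hence h: "N * (S powr (1/r - 1) * \<beta> powr (r - 2) * inner (v$j) d) = inner d (w$j)" for d
      using Ssplit[of j] nb unfolding Cj_def by simp
    have "inner (c *\<^sub>R v$j) d = inner (w$j) d" for d
    proof -
      have "inner (w$j) d = inner d (w$j)" by (rule inner_commute)
      thus ?thesis using h[of d] by (simp add: c_def mult.assoc)
    qed
    hence "c *\<^sub>R v$j = w$j" by (rule inner_self_zero_eq)
    thus ?thesis by simp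
  next
    case True
    have r1: "1 < r" using nz[OF True] .
    have h0: "N * 0 = inner d (w$j)" for d
    proof (rule stationary[OF le eq])
      have "(\<lambda>t. lpnorm p (v + t *\<^sub>R axis j d)) = (\<lambda>t. (S + norm (t *\<^sub>R d) powr r) powr (1/r))"
        by (rule ext) (use Ssplit[of j] True in \<open>simp add: lpnorm_axis[OF p(1)]\<close>)
      thus "((\<lambda>t. lpnorm p (v + t *\<^sub>R axis j d)) has_real_derivative 0) (at 0)"
        using deriv_part0[OF r1 Spos] by simp
    qed
    have "inner (w$j) (w$j) = 0" using h0[of "w$j"] by simp
    hence "w$j = 0" by simp
    thus ?thesis using True by simp
  qed
  hence "w = c *\<^sub>R v" by (simp add: vec_eq_iff)
  thus ?thesis by blast
qed



lemma core_inf: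
  fixes v w :: "'a::real_inner ^ 'm"
  assumes le: "\<And>x. (\<Sum>i\<in>UNIV. inner (x$i) (w$i)) \<le> N * lpnorm \<infinity> x"
    and eq: "(\<Sum>i\<in>UNIV. inner (v$i) (w$i)) = N * lpnorm \<infinity> v"
    and v0: "v \<noteq> 0" and km: "v \<in> Km1" and N: "0 \<le> N"
  shows "\<exists>c. w = c *\<^sub>R v"
proof -
  obtain k where k: "v $ k \<noteq> 0" using v0 by (metis vec_eq_iff zero_index)
  have card: "card {i. v $ i \<noteq> 0} \<le> 1" using km by (simp add: Km1_def)
  have vz: "v $ i = 0" if "i \<noteq> k" for i
  proof (rule ccontr)
    assume "v $ i \<noteq> 0"
    hence "{i, k} \<subseteq> {i. v $ i \<noteq> 0}" using k by auto
    hence "card {i, k} \<le> card {i. v $ i \<noteq> 0}" by (intro card_mono) auto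
    thus False using card that by simp
  qed
  define \<beta> where "\<beta> = norm (v $ k)"
  have \<beta>: "\<beta> > 0" using k by (simp add: \<beta>_def)
  have nv: "lpnorm \<infinity> v = \<beta>"
    unfolding lpnorm_inf
  proof (rule Max_eqI)
    show "finite (range (\<lambda>i. norm (v $ i)))" by simp
    show "\<beta> \<in> range (\<lambda>i. norm (v $ i))" by (auto simp: \<beta>_def)
    show "b \<le> \<beta>" if hb: "b \<in> range (\<lambda>i. norm (v $ i))" for b
    proof -
      obtain i where b: "b = norm (v $ i)" using hb by blast
      show ?thesis
      proof (cases "i = k")
        case True thus ?thesis using b by (simp add: \<beta>_def)
      next
        case False thus ?thesis using b vz \<beta> by simp
      qed
    qed
  qed
  define L where "L = (\<Sum>i\<in>UNIV. inner (v$i) (w$i))"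
  have L: "L = inner (v$k) (w$k)"
  proof -
    have "L = inner (v$k) (w$k) + (\<Sum>i\<in>UNIV-{k}. inner (v$i) (w$i))"
      unfolding L_def by (rule sum.remove) auto
    also have "(\<Sum>i\<in>UNIV-{k}. inner (v$i) (w$i)) = 0"
      by (rule sum.neutral) (simp add: vz)
    finally show ?thesis by simp
  qed
  have LN: "L = N * \<beta>" using eq nv by (simp add: L_def)
  have wz: "w $ j = 0" if jk: "j \<noteq> k" for j
  proof -
    define \<epsilon> where "\<epsilon> = \<beta> / (norm (w $ j) + 1)"
    have \<epsilon>: "\<epsilon> > 0" using \<beta> by (simp add: \<epsilon>_def add_nonneg_pos)
    have \<epsilon>w: "\<epsilon> * norm (w $ j) \<le> \<beta>"
    proof -
      have "\<epsilon> * norm (w $ j) \<le> \<epsilon> * (norm (w $ j) + 1)" using \<epsilon> by simp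
      also have "\<dots> = \<beta>"
        using add_nonneg_pos[OF norm_ge_zero[of "w$j"] zero_less_one] by (simp add: \<epsilon>_def)
      finally show ?thesis .
    qed
    define x where "x = v + \<epsilon> *\<^sub>R axis j (w $ j)"
    have nx: "lpnorm \<infinity> x \<le> \<beta>"
      unfolding lpnorm_inf
    proof (subst Max_le_iff)
      show "finite (range (\<lambda>i. norm (x $ i)))" by simp
      show "range (\<lambda>i. norm (x $ i)) \<noteq> {}" by simp
      show "\<forall>a\<in>range (\<lambda>i. norm (x $ i)). a \<le> \<beta>"
      proof
        fix a assume "a \<in> range (\<lambda>i. norm (x $ i))"
        then obtain i where a: "a = norm (x $ i)" by blast
        show "a \<le> \<beta>"
        proof (cases "i = j")
          case True thus ?thesis using a jk vz[OF jk] \<epsilon> \<epsilon>w by (simp add: x_def axis_def)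
        next
          case False
          show ?thesis
          proof (cases "i = k")
            case True thus ?thesis using a False by (simp add: x_def axis_def \<beta>_def)
          next
            case False2: False
            thus ?thesis using a False vz[OF False2] \<beta> by (simp add: x_def axis_def)
          qed
        qed
      qed
    qed
    have "L + \<epsilon> * inner (w $ j) (w $ j) \<le> N * lpnorm \<infinity> x"
      using le[of x] unfolding x_def lin_axis by (simp add: L_def)
    also have "\<dots> \<le> N * \<beta>" using nx N by (simp add: mult_left_mono)
    finally have "\<epsilon> * inner (w $ j) (w $ j) \<le> 0" using LN by simp
    hence "inner (w $ j) (w $ j) \<le> 0" using \<epsilon> by (simp add: mult_le_0_iff)
    thus ?thesis using inner_ge_zero[of "w$j"] by (metis order_antisym inner_eq_zero_iff)
  qed
  have wk: "norm (w $ k) \<le> N"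
  proof -
    define x where "x = 0 + 1 *\<^sub>R axis k (w $ k)"
    have nx: "lpnorm \<infinity> x = norm (w $ k)"
      unfolding lpnorm_inf
    proof (rule Max_eqI)
      show "finite (range (\<lambda>i. norm (x $ i)))" by simp
      show "norm (w $ k) \<in> range (\<lambda>i. norm (x $ i))" by (auto simp: x_def axis_def)
      show "b \<le> norm (w $ k)" if hb: "b \<in> range (\<lambda>i. norm (x $ i))" for b
        using hb by (auto simp: x_def axis_def)
    qed
    have "(\<Sum>i\<in>UNIV. inner ((0::'a^'m)$i) (w$i)) + 1 * inner (w$k) (w$k) \<le> N * norm (w $ k)"
    proof -
      have nx': "lpnorm \<infinity> (axis k (w$k)) = norm (w$k)" using nx by (simp add: x_def)
      show ?thesis using le[of x] unfolding x_def lin_axis by (simp add: nx')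
    qed
    hence "norm (w$k) * norm (w$k) \<le> N * norm (w $ k)" by (simp add: dot_square_norm power2_eq_square)
    thus ?thesis using N by (cases "w $ k = 0") auto
  qed
  define c where "c = N / \<beta>"
  have "inner (w$k - c *\<^sub>R v$k) (w$k - c *\<^sub>R v$k) = inner (w$k) (w$k) - 2 * c * inner (v$k) (w$k) + c^2 * inner (v$k) (v$k)"
    by (simp add: inner_diff_left inner_diff_right inner_commute power2_eq_square algebra_simps)
  also have "\<dots> = norm (w$k)^2 - N^2"
    using L LN \<beta> by (simp add: c_def dot_square_norm power2_eq_square \<beta>_def field_simps)
  also have "\<dots> \<le> 0" using wk N by (simp add: abs_le_iff power_mono)
  finally have "inner (w$k - c *\<^sub>R v$k) (w$k - c *\<^sub>R v$k) \<le> 0" .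
  hence "w$k = c *\<^sub>R v$k" using inner_ge_zero[of "w$k - c *\<^sub>R v$k"]
    by (metis order_antisym inner_eq_zero_iff eq_iff_diff_eq_0)
  hence "w = c *\<^sub>R v" using wz vz by (auto simp: vec_eq_iff) (metis scaleR_zero_right)
  thus ?thesis by blast
qed



lemma core:
  fixes v w :: "'a::real_inner ^ 'm"
  assumes le: "\<And>x. (\<Sum>i\<in>UNIV. inner (x$i) (w$i)) \<le> N * lpnorm p x"
    and eq: "(\<Sum>i\<in>UNIV. inner (v$i) (w$i)) = N * lpnorm p v"
    and v0: "v \<noteq> 0" and ems: "equal_modulus_support v" and N: "0 \<le> N"
    and pc: "(1 < p \<and> p < \<infinity>) \<or> (p = 1 \<and> v \<in> K1) \<or> (p = \<infinity> \<and> v \<in> Km1)"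
  shows "\<exists>c. w = c *\<^sub>R v"
proof -
  consider (a) "1 < p" "p < \<infinity>" | (b) "p = 1" "v \<in> K1" | (c) "p = \<infinity>" "v \<in> Km1" using pc by blast
  thus ?thesis
  proof cases
    case a
    then obtain r where r: "p = ereal r" "1 < r" by (cases p) auto
    show ?thesis by (rule core_fin[OF le eq v0 ems r(1)]) (use r in auto)
  next
    case b
    have p1: "p = ereal 1" using b by (simp add: one_ereal_def)
    obtain k where k: "v $ k \<noteq> 0" using v0 by (metis vec_eq_iff zero_index)
    have nz: "v $ j \<noteq> 0" for j
    proof -
      have "norm (v $ j) = norm (v $ k)" using b by (simp add: K1_def)
      thus ?thesis using k by auto
    qed
    show ?thesis by (rule core_fin[OF le eq v0 ems p1]) (use nz in auto)
  next
    case c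
    show ?thesis by (rule core_inf) (use le eq v0 c N in auto)
  qed
qed

lemma main_generic:
  fixes A :: "'a::{real_inner, real_algebra_1} ^'m^'n" and B :: "'a ^'n^'m"
  assumes p: "1 \<le> p" and q: "1 \<le> q"
    and adj: "\<And>x u. (\<Sum>i\<in>UNIV. inner ((A *v x)$i) (u$i)) = (\<Sum>j\<in>UNIV. inner (x$j) ((B *v u)$j))"
    and hyp: "lemma3p1_hyp p q A v"
  shows "\<exists>c::real. (B ** A) *v v = c *\<^sub>R v"
proof -
  have lin: "B *v (\<alpha> *\<^sub>R u) = \<alpha> *\<^sub>R (B *v u)" for \<alpha> :: real and u :: "'a^'n"
    by (simp add: vec_eq_iff matrix_vector_mult_def scaleR_sum_right)
  have max: "is_pq_maximizer p q A v" and ems: "equal_modulus_support v"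
    and emy: "equal_modulus_support (A *v v)"
    and pc: "(1 < p \<and> p < \<infinity>) \<or> (p = 1 \<and> v \<in> K1) \<or> (p = \<infinity> \<and> v \<in> Km1)"
    using hyp by (auto simp: lemma3p1_hyp_def)
  have v0: "v \<noteq> 0" using max by (simp add: is_pq_maximizer_def)
  define y where "y = A *v v"
  have By: "(B ** A) *v v = B *v y" by (simp add: y_def matrix_vector_mul_assoc)
  show ?thesis
  proof (cases "y = 0")
    case True
    have "B *v y = 0" using lin[of 0 0] True by simp
    thus ?thesis using By by (intro exI[of _ 0]) simp
  next
    case False
    obtain u K where K: "K > 0" and hz: "\<And>z. (\<Sum>i\<in>UNIV. inner (z$i) (u$i)) \<le> K * lpnorm q z"
      and hy: "(\<Sum>i\<in>UNIV. inner (y$i) (u$i)) = K * lpnorm q y" and al: "\<exists>\<alpha>>0. y = \<alpha> *\<^sub>R u"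
      using holder_lin[OF q emy[folded y_def] False] by blast
    have nv: "lpnorm p v > 0" using lpnorm_pos[OF p v0] .
    define M where "M = lpnorm q y / lpnorm p v"
    have M: "M \<ge> 0" using nv lpnorm_nonneg[of q y] by (simp add: M_def)
    define N where "N = K * M"
    have N: "N \<ge> 0" using K M by (simp add: N_def)
    define w where "w = B *v u"
    have le: "(\<Sum>i\<in>UNIV. inner (x$i) (w$i)) \<le> N * lpnorm p x" for x
    proof (cases "x = 0")
      case True
      thus ?thesis using N lpnorm_nonneg[of p x] by simp
    next
      case False
      have nx: "lpnorm p x > 0" using lpnorm_pos[OF p False] .
      have "lpnorm q (A *v x) / lpnorm p x \<le> M"
        using max False by (simp add: is_pq_maximizer_def M_def y_def)
      hence r: "lpnorm q (A *v x) \<le> M * lpnorm p x" using nx by (simp add: pos_divide_le_eq)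
      have "(\<Sum>i\<in>UNIV. inner (x$i) (w$i)) = (\<Sum>i\<in>UNIV. inner ((A *v x)$i) (u$i))"
        by (simp add: adj w_def)
      also have "\<dots> \<le> K * lpnorm q (A *v x)" by (rule hz)
      also have "\<dots> \<le> K * (M * lpnorm p x)" using r K by simp
      finally show ?thesis by (simp add: N_def mult.assoc)
    qed
    have eq: "(\<Sum>i\<in>UNIV. inner (v$i) (w$i)) = N * lpnorm p v"
    proof -
      have "(\<Sum>i\<in>UNIV. inner (v$i) (w$i)) = (\<Sum>i\<in>UNIV. inner (y$i) (u$i))"
        by (simp add: adj w_def y_def)
      also have "\<dots> = K * lpnorm q y" by (rule hy)
      also have "lpnorm q y = M * lpnorm p v" using nv by (simp add: M_def)
      finally show ?thesis by (simp add: N_def mult.assoc)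
    qed
    obtain c where c: "w = c *\<^sub>R v" using core[OF le eq v0 ems N pc] by blast
    obtain \<alpha> where \<alpha>: "y = \<alpha> *\<^sub>R u" using al by blast
    have "(B ** A) *v v = \<alpha> *\<^sub>R w" using By lin by (simp add: \<alpha> w_def)
    also have "\<dots> = (\<alpha> * c) *\<^sub>R v" by (simp add: c)
    finally show ?thesis by blast
  qed
qed

lemma adj_real:
  fixes A :: "real ^'m^'n"
  shows "(\<Sum>i\<in>UNIV. inner ((A *v x)$i) (u$i)) = (\<Sum>j\<in>UNIV. inner (x$j) ((transpose A *v u)$j))"
proof -
  have "(\<Sum>i\<in>UNIV. inner ((A *v x)$i) (u$i)) = (\<Sum>i\<in>UNIV. \<Sum>j\<in>UNIV. A$i$j * x$j * u$i)"
    by (simp add: matrix_vector_mult_def sum_distrib_right)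
  also have "\<dots> = (\<Sum>j\<in>UNIV. \<Sum>i\<in>UNIV. A$i$j * x$j * u$i)" by (rule sum.swap)
  also have "\<dots> = (\<Sum>j\<in>UNIV. inner (x$j) ((transpose A *v u)$j))"
    by (simp add: matrix_vector_mult_def transpose_def sum_distrib_left mult_ac)
  finally show ?thesis .
qed

lemma inner_cmult: "inner (a * z) (u::complex) = inner z (cnj a * u)"
  by (simp add: inner_complex_def algebra_simps)

lemma adj_complex:
  fixes A :: "complex ^'m^'n"
  shows "(\<Sum>i\<in>UNIV. inner ((A *v x)$i) (u$i)) = (\<Sum>j\<in>UNIV. inner (x$j) ((cadjoint A *v u)$j))"
proof -
  have "(\<Sum>i\<in>UNIV. inner ((A *v x)$i) (u$i)) = (\<Sum>i\<in>UNIV. \<Sum>j\<in>UNIV. inner (x$j) (cnj (A$i$j) * u$i))"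
    by (simp only: matrix_vector_mult_def vec_lambda_beta inner_sum_left inner_cmult)
  also have "\<dots> = (\<Sum>j\<in>UNIV. \<Sum>i\<in>UNIV. inner (x$j) (cnj (A$i$j) * u$i))" by (rule sum.swap)
  also have "\<dots> = (\<Sum>j\<in>UNIV. inner (x$j) ((cadjoint A *v u)$j))"
    by (simp add: matrix_vector_mult_def cadjoint_def inner_sum_right)
  finally show ?thesis .
qed

theorem lemma3p1:
  fixes p q :: ereal
  assumes "1 \<le> p" and "1 \<le> q"
  shows "(\<forall>(A :: real ^ 'm ^ 'n) v. lemma3p1_hyp p q A v \<longrightarrow>
            (\<exists>c. (transpose A ** A) *v v = c *s v))
       \<and> (\<forall>(A :: complex ^ 'm ^ 'n) v. lemma3p1_hyp p q A v \<longrightarrow>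
            (\<exists>c. (cadjoint A ** A) *v v = c *s v))"
proof (intro conjI allI impI)
  fix A :: "real ^ 'm ^ 'n" and v assume h: "lemma3p1_hyp p q A v"
  obtain c :: real where "(transpose A ** A) *v v = c *\<^sub>R v"
    using main_generic[OF assms adj_real h] by blast
  hence "(transpose A ** A) *v v = c *s v" by (simp add: vec_eq_iff)
  thus "\<exists>c. (transpose A ** A) *v v = c *s v" by blast
next
  fix A :: "complex ^ 'm ^ 'n" and v assume h: "lemma3p1_hyp p q A v"
  obtain c :: real where hv: "(cadjoint A ** A) *v v = c *\<^sub>R v"
    using main_generic[OF assms adj_complex h] by blast
  have "(cadjoint A ** A) *v v = (of_real c :: complex) *s v"
    unfolding hv by (simp add: vec_eq_iff of_real_def)
  thus "\<exists>c. (cadjoint A ** A) *v v = c *s v" by blast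
qed

end
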